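(* Let $D_0=\{(p,u)\in\mathbb{R}^2: p>0,\ u>-1\}$ and for $n\ge1$ let $D_n=\Phi^{-1}(D_{n-1})\cap D_0$, where $\Phi^{-1}(D)=\{(p,u): p\ne0,\ \Phi(p,u)\in D\}$. Then for every $n\ge0$ the set $D_n$ is convex.
   Context: $\Phi$ is the partial map of $\mathbb{R}^2$ defined for $p\ne0$ by $\Phi(p,u)=\bigl(p^2(u+1)-1,\ 1/p\bigr)$. *)

theory Defs
  imports "HOL-Analysis.Analysis"
begin

text \<open>The partial map Phi, defined for p \<noteq> 0.\<close>
definition Phi :: "real \<times> real \<Rightarrow> real \<times> real" where
  "Phi = (\<lambda>(p, u). (p^2 * (u + 1) - 1, 1 / p))"

definition Phi_preimage :: "(real \<times> real) set \<Rightarrow> (real \<times> real) set" where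
  "Phi_preimage D = {(p, u). p \<noteq> 0 \<and> Phi (p, u) \<in> D}"

definition D0 :: "(real \<times> real) set" where
  "D0 = {(p, u). p > 0 \<and> u > -1}"

fun Dn :: "nat \<Rightarrow> (real \<times> real) set" where
  "Dn 0 = D0"
| "Dn (Suc n) = Phi_preimage (Dn n) \<inter> D0"

end

theory Submission
  imports Defs
begin

lemma key_poly:
  fixes x a b :: real
  assumes "0 < x" "0 \<le> a" "0 \<le> b"
  defines "s \<equiv> x + a" and "y \<equiv> x + a + b"
  defines "Q \<equiv> (y - x) * (s^2+s * x+x^2) + x^3"
  defines "P \<equiv> (y - x) * (s^3+s^2 * x+s * x^2+x^3) + x^4"
  shows "Q^2 \<le> y^2  *  P"
proof -
  have "y^2  *  P - Q^2 = 4 * b^3 * x^3 + 6 * a * b^2 * x^3 + 6 * a * b^3 * x^2 + 2 * a^2 * b * x^3 + 11 * a^2 * b^2 * x^2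
     + 4 * a^2 * b^3 * x + 5 * a^3 * b * x^2 + 8 * a^3 * b^2 * x + a^3 * b^3 + 4 * a^4 * b * x + 2 * a^4 * b^2 + a^5 * b"
    unfolding P_def Q_def s_def y_def by algebra
  moreover have "0 \<le> 4 * b^3 * x^3 + 6 * a * b^2 * x^3 + 6 * a * b^3 * x^2 + 2 * a^2 * b * x^3 + 11 * a^2 * b^2 * x^2
     + 4 * a^2 * b^3 * x + 5 * a^3 * b * x^2 + 8 * a^3 * b^2 * x + a^3 * b^3 + 4 * a^4 * b * x + 2 * a^4 * b^2 + a^5 * b"
    using assms by simp
  ultimately show ?thesis by linarith
qed


lemma main_ineq:
  fixes x y l s :: real
  assumes "0 < x" "x < y" "0 < l" "l < 1" "s = l * x + (1-l) * y"
  shows "(s^3 - l * x^3)^2 \<le> (1-l) * y^2 * (s^4 - l * x^4)"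
proof -
  define m where "m = 1 - l"
  define Q where "Q = (y - x) * (s^2+s * x+x^2) + x^3"
  define P where "P = (y - x) * (s^3+s^2 * x+s * x^2+x^3) + x^4"
  have m0: "0 \<le> m" using assms m_def by simp
  have sa: "s = x + (s - x)" and sb: "y = x + (s - x) + (y - s)" by simp_all
  have sx: "s - x = m * (y-x)" using assms(5) unfolding m_def by (simp add: algebra_simps)
  have a0: "0 \<le> s - x" unfolding sx using m0 assms by simp
  have sy: "y - s = l * (y-x)" using assms by (simp add: algebra_simps)
  have b0: "0 \<le> y - s" unfolding sy using assms by simp
  have "Q^2 \<le> y^2  *  P"
    using key_poly[OF assms(1) a0 b0] unfolding Q_def P_def by simp
  have e1: "s^3 - l * x^3 = m * Q"
  proof -
    have "s^3 - l * x^3 = (s-x) * (s^2+s * x+x^2) + m * x^3" unfolding m_def by (simp add: algebra_simps power2_eq_square power3_eq_cube)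
    also have "\<dots> = m * Q" unfolding Q_def sx by (simp add: algebra_simps)
    finally show ?thesis .
  qed
  have e2: "s^4 - l * x^4 = m * P"
  proof -
    have "s^4 - l * x^4 = (s-x) * (s^3+s^2 * x+s * x^2+x^3) + m * x^4" unfolding m_def by (simp add: algebra_simps power2_eq_square power3_eq_cube power4_eq_xxxx)
    also have "\<dots> = m * P" unfolding P_def sx by (simp add: algebra_simps)
    finally show ?thesis .
  qed
  have "(m * Q)^2 = m^2  *  Q^2" by (simp add: power_mult_distrib)
  also have "\<dots> \<le> m^2  *  (y^2 * P)" using \<open>Q^2 \<le> y^2  *  P\<close> by (simp add: mult_left_mono)
  also have "\<dots> = m * y^2 * (m * P)" by (simp add: power2_eq_square)
  finally show ?thesis using e1 e2 m_def by simp
qed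


lemma convex_pairsI:
  fixes S :: "(real \<times> real) set"
  assumes H: "\<And>a b c d l. (a,b)\<in>S \<Longrightarrow> (c,d)\<in>S \<Longrightarrow> 0<l \<Longrightarrow> l<1 \<Longrightarrow> (l * a+(1-l) * c, l * b+(1-l) * d) \<in> S"
  shows "convex S"
proof (rule convexI)
  fix x y :: "real \<times> real" and u v :: real
  assume x: "x \<in> S" and y: "y \<in> S" and u: "0 \<le> u" and v: "0 \<le> v" and uv: "u + v = 1"
  obtain a b where xab: "x = (a,b)" by fastforce
  obtain c d where ycd: "y = (c,d)" by fastforce
  show "u  *\<^sub>R x + v  *\<^sub>R y \<in> S"
  proof (cases "u = 0")
    case True then have "v = 1" using uv by simp
    then show ?thesis using True y by simp
  next
    case False
    show ?thesis
    proof (cases "u = 1")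
      case True then have "v = 0" using uv by simp
      then show ?thesis using True x by simp
    next
      case False2: False
      have "0 < u" "u < 1" using u v uv False False2 by auto
      have F: "(u * a+(1-u) * c, u * b+(1-u) * d) \<in> S" using H[OF x[unfolded xab] y[unfolded ycd] \<open>0<u\<close> \<open>u<1\<close>] .
      have "v = 1 - u" using uv by simp
      then have eq: "u  *\<^sub>R x + v  *\<^sub>R y = (u * a+(1-u) * c, u * b+(1-u) * d)" using xab ycd by simp
      show ?thesis by (simp only: eq) (rule F)
    qed
  qed
qed

lemma convex_pairsD:
  fixes S :: "(real \<times> real) set"
  assumes "convex S" "(a,b)\<in>S" "(c,d)\<in>S" "0\<le>l" "l\<le>1"
  shows "(l * a+(1-l) * c, l * b+(1-l) * d) \<in> S"
  using convexD[OF assms(1,2,3), of l "1-l"] assms(4,5) by simp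

definition Mprop :: "(real \<times> real) set \<Rightarrow> bool" where
  "Mprop D \<longleftrightarrow> (\<forall>q v q2 v2. (q,v)\<in>D \<longrightarrow> 0<v \<longrightarrow> 0<v2 \<longrightarrow> q \<le> q2 \<longrightarrow>
      (1+q)  *  v \<le> (1+q2)  *  v2 \<longrightarrow> (q2,v2)\<in>D)"

definition Gset :: "(real \<times> real) set \<Rightarrow> (real \<times> real) set" where
  "Gset D = {(s,t). 0<s \<and> (t/s^3 - 1, s) \<in> D}"

lemma MpropD:
  assumes "Mprop D" "(q,v)\<in>D" "0<v" "0<v2" "q \<le> q2" "(1+q)  *  v \<le> (1+q2)  *  v2"
  shows "(q2,v2)\<in>D"
  using assms unfolding Mprop_def by blast

lemma G_core:
  assumes cD: "convex D" and M: "Mprop D" and pos: "\<And>q v. (q,v)\<in>D \<Longrightarrow> 0<q"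
    and h1: "(s1,t1) \<in> Gset D" and h2: "(s2,t2) \<in> Gset D" and le: "s1 \<le> s2"
    and l0: "0<l" and l1: "l<1"
  shows "(l * s1+(1-l) * s2, l * t1+(1-l) * t2) \<in> Gset D"
proof -
  define s where "s = l * s1+(1-l) * s2"
  define t where "t = l * t1+(1-l) * t2"
  define A1 where "A1 = t1/s1^3"
  define A2 where "A2 = t2/s2^3"
  have s1p: "0<s1" and D1: "(A1 - 1, s1) \<in> D" using h1 unfolding Gset_def A1_def by auto
  have s2p: "0<s2" and D2: "(A2 - 1, s2) \<in> D" using h2 unfolding Gset_def A2_def by auto
  have A1p: "0 < A1" using pos[OF D1] by simp
  have A2p: "0 < A2" using pos[OF D2] by simp
  have t1e: "t1 = A1 * s1^3" using s1p unfolding A1_def by simp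
  have t2e: "t2 = A2 * s2^3" using s2p unfolding A2_def by simp
  have "0 < l * s1" "0 < (1-l) * s2" using s1p s2p l0 l1 by simp_all
  then have sp: "0 < s" unfolding s_def by simp
  have "(t/s^3 - 1, s) \<in> D"
  proof (cases "s1 = s2")
    case True
    have ss: "s = s1" unfolding s_def True by (simp add: algebra_simps)
    have mem: "(l * (A1-1)+(1-l) * (A2-1), l * s1+(1-l) * s1) \<in> D"
      using convex_pairsD[OF cD D1 D2[folded True], of l] l0 l1 by simp
    have "t = (l * A1+(1-l) * A2) * s1^3" unfolding t_def t1e t2e True by (simp add: algebra_simps)
    then have "t/s^3 = l * A1+(1-l) * A2" using s1p ss by simp
    then have "t/s^3 - 1 = l * (A1-1)+(1-l) * (A2-1)"
      by (simp add: algebra_simps)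
    moreover have "l * s1+(1-l) * s1 = s" using ss by (simp add: algebra_simps)
    moreover note mem
    ultimately show ?thesis by simp
  next
    case False
    then have lt: "s1 < s2" using le by simp
    have e1: "s - s1 = (1-l) * (s2-s1)" unfolding s_def by (simp add: algebra_simps)
    have e2: "s2 - s = l * (s2-s1)" unfolding s_def by (simp add: algebra_simps)
    have p1: "0 < (1-l) * (s2-s1)" using lt l1 by simp
    have p2: "0 < l * (s2-s1)" using lt l0 by simp
    have ss1: "s1 < s" using e1 p1 by linarith
    have ss2: "s < s2" using e2 p2 by linarith
    define nu where "nu = l * s1^3/s^3"
    have c3: "s1^3 < s^3" using ss1 s1p by (simp add: power_strict_mono)
    have nu0: "0 < nu" unfolding nu_def using l0 s1p sp by simp
    have nul: "nu < l" unfolding nu_def using l0 c3 sp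
      by (simp add: divide_less_eq)
    have nu1: "nu < 1" using nul l1 by simp
    define sg where "sg = (s - nu * s1)/(1-nu)"
    have nus: "nu * s1 < s" using mult_strict_right_mono[OF nu1 s1p] ss1 by simp
    have sgp: "0 < sg" unfolding sg_def using nus nu1 by simp
    have sgle: "sg \<le> s2"
    proof -
      have "l * (s2-s1) \<ge> nu * (s2-s1)" using nul lt by (simp add: mult_right_mono)
      then have "s - nu * s1 \<le> (1-nu) * s2" unfolding s_def by (simp add: algebra_simps)
      then show ?thesis unfolding sg_def using nu1 by (simp add: divide_le_eq mult.commute)
    qed
    have Dm: "(A2 * s2/sg - 1, sg) \<in> D"
    proof (rule MpropD[OF M D2 s2p sgp])
      have h: "1 \<le> s2/sg" using sgle sgp by simp
      have "A2 * 1 \<le> A2 * (s2/sg)" using mult_left_mono[OF h, of A2] A2p by simp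
      then show "A2 - 1 \<le> A2  *  s2 / sg - 1" by simp
      show "(1 + (A2 - 1))  *  s2 \<le> (1 + (A2  *  s2 / sg - 1))  *  sg" using sgp by simp
    qed
    have Dc: "(nu * (A1-1)+(1-nu) * (A2 * s2/sg - 1), nu * s1+(1-nu) * sg) \<in> D"
      using convex_pairsD[OF cD D1 Dm, of nu] nu0 nu1 by simp
    have sgs: "nu * s1+(1-nu) * sg = s" unfolding sg_def using nu1 by simp
    have Dc': "(nu * A1+(1-nu) * A2 * s2/sg - 1, s) \<in> D"
      using Dc sgs by (simp add: algebra_simps)
    have keyK: "(1-nu) * s2/sg \<le> (1-l) * s2^3/s^3"
    proof -
      have N3: "nu * s^3 = l * s1^3" unfolding nu_def using sp by simp
      have E1: "(1-nu) * s^3 = s^3 - l * s1^3" using N3 by (simp add: algebra_simps)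
      have "(s-nu * s1) * s^3 = s * s^3 - (nu * s^3) * s1" by (simp add: algebra_simps)
      also have "\<dots> = s^4 - l * s1^4" unfolding N3 by (simp add: power3_eq_cube power4_eq_xxxx algebra_simps)
      finally have E2: "(s-nu * s1) * s^3 = s^4 - l * s1^4" .
      have MI: "(s^3 - l * s1^3)^2 \<le> (1-l) * s2^2 * (s^4 - l * s1^4)"
        using main_ineq[OF s1p lt l0 l1 s_def] .
      have "((1-nu)^2 * s2 * s^3) * s^3 = s2 * ((1-nu) * s^3)^2"
        by (simp add: power2_eq_square algebra_simps)
      also have "\<dots> = s2 * (s^3 - l * s1^3)^2" using E1 by simp
      also have "\<dots> \<le> s2 * ((1-l) * s2^2 * (s^4 - l * s1^4))" using MI s2p by (simp add: mult_left_mono)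
      also have "\<dots> = s2 * ((1-l) * s2^2 * ((s-nu * s1) * s^3))" by (simp only: E2)
      also have "\<dots> = ((1-l) * s2^3 * (s-nu * s1)) * s^3"
        by (simp add: power2_eq_square power3_eq_cube algebra_simps)
      finally have KEY: "(1-nu)^2 * s2 * s^3 \<le> (1-l) * s2^3 * (s-nu * s1)"
        using sp by (simp add: mult_le_cancel_right_pos)
      moreover have "(1-nu) * s2/sg = (1-nu)^2 * s2/(s-nu * s1)"
        unfolding sg_def using nu1 nus by (simp add: divide_divide_eq_right power2_eq_square)
      moreover have "(1-nu)^2 * s2/(s-nu * s1) \<le> (1-l) * s2^3/s^3"
      proof -
        have Dp: "0 < s-nu * s1" using nus by simp
        have Sp: "0 < s^3" using sp by simp
        have "(1-nu)^2 * s2/(s-nu * s1) = ((1-nu)^2 * s2 * s^3)/((s-nu * s1) * s^3)" using Sp by simp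
        also have "\<dots> \<le> ((1-l) * s2^3 * (s-nu * s1))/((s-nu * s1) * s^3)"
          by (rule divide_right_mono) (use KEY Dp Sp in auto)
        also have "\<dots> = (1-l) * s2^3/s^3" using Dp by simp
        finally show ?thesis .
      qed
      ultimately show ?thesis by simp
    qed
    have teq: "t/s^3 = nu * A1 + (1-l) * s2^3 * A2/s^3"
      unfolding t_def t1e t2e nu_def using sp by (simp add: field_simps)
    have "(1-nu) * A2 * s2/sg \<le> (1-l) * s2^3 * A2/s^3"
      using mult_right_mono[OF keyK, of A2] A2p by (simp add: algebra_simps)
    then have qle: "nu * A1+(1-nu) * A2 * s2/sg - 1 \<le> t/s^3 - 1" using teq by simp
    have le2: "(1 + (nu * A1+(1-nu) * A2 * s2/sg - 1)) * s \<le> (1 + (t/s^3 - 1)) * s"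
      by (rule mult_right_mono) (use qle sp in auto)
    show ?thesis by (rule MpropD[OF M Dc' sp sp qle le2])
  qed
  then show ?thesis unfolding Gset_def s_def t_def using sp s_def by simp
qed


lemma G_convex:
  assumes cD: "convex D" and M: "Mprop D" and pos: "\<And>q v. (q,v)\<in>D \<Longrightarrow> 0<q"
  shows "convex (Gset D)"
proof (rule convex_pairsI)
  fix a b c d l :: real
  assume h1: "(a,b) \<in> Gset D" and h2: "(c,d) \<in> Gset D" and l0: "0 < l" and l1: "l < 1"
  show "(l * a + (1-l) * c, l * b + (1-l) * d) \<in> Gset D"
  proof (cases "a \<le> c")
    case True
    show ?thesis using G_core[OF cD M pos h1 h2 True l0 l1] .
  next
    case False
    then have "c \<le> a" by simp
    have "0 < 1 - l" "1 - l < 1" using l0 l1 by simp_all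
    from G_core[OF cD M pos h2 h1 \<open>c \<le> a\<close> this]
    show ?thesis by (simp add: algebra_simps)
  qed
qed

lemma persp_convex:
  fixes G :: "(real \<times> real) set"
  assumes cG: "convex G"
  shows "convex {(p,u). 0<p \<and> -1<u \<and> (1/p, (u+1)/p) \<in> G}"
proof (rule convex_pairsI)
  fix p1 u1 p2 u2 l :: real
  assume h1: "(p1,u1) \<in> {(p,u). 0<p \<and> -1<u \<and> (1/p, (u+1)/p) \<in> G}"
    and h2: "(p2,u2) \<in> {(p,u). 0<p \<and> -1<u \<and> (1/p, (u+1)/p) \<in> G}"
    and l0: "0 < l" and l1: "l < 1"
  have p1: "0<p1" "-1<u1" and g1: "(1/p1, (u1+1)/p1) \<in> G" using h1 by auto
  have p2: "0<p2" "-1<u2" and g2: "(1/p2, (u2+1)/p2) \<in> G" using h2 by auto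
  define p where "p = l * p1 + (1-l) * p2"
  define u where "u = l * u1 + (1-l) * u2"
  have a1: "0 < l * p1" "0 < (1-l) * p2" using p1 p2 l0 l1 by simp_all
  then have pp: "0 < p" unfolding p_def by simp
  have "l * (u1+1) > 0" "(1-l) * (u2+1) > 0" using p1 p2 l0 l1 by simp_all
  then have "u + 1 > 0" unfolding u_def by (simp add: algebra_simps)
  then have up: "-1 < u" by simp
  define mu where "mu = l * p1 / p"
  have mu0: "0 \<le> mu" unfolding mu_def using a1 pp by simp
  have mu1: "mu \<le> 1" unfolding mu_def using a1 pp p_def by simp
  have omu: "1 - mu = (1-l) * p2 / p" unfolding mu_def p_def using pp p_def by (simp add: field_simps)
  have "(mu * (1/p1) + (1-mu) * (1/p2), mu * ((u1+1)/p1) + (1-mu) * ((u2+1)/p2)) \<in> G"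
    using convex_pairsD[OF cG g1 g2 mu0 mu1] .
  moreover have "mu * (1/p1) + (1-mu) * (1/p2) = 1/p"
    unfolding omu unfolding mu_def using p1 p2 pp p_def by (simp add: field_simps)
  moreover have "mu * ((u1+1)/p1) + (1-mu) * ((u2+1)/p2) = (u+1)/p"
    unfolding omu unfolding mu_def u_def using p1 p2 pp by (simp add: field_simps)
  ultimately have "(1/p, (u+1)/p) \<in> G" by simp
  then show "(l * p1 + (1-l) * p2, l * u1 + (1-l) * u2) \<in> {(p,u). 0<p \<and> -1<u \<and> (1/p, (u+1)/p) \<in> G}"
    using pp up unfolding p_def u_def by simp
qed

lemma memSuc:
  "(p,u) \<in> Dn (Suc m) \<longleftrightarrow> 0<p \<and> -1<u \<and> (p^2 * (u+1) - 1, 1/p) \<in> Dn m"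
  by (auto simp: Phi_preimage_def Phi_def D0_def)

lemma Dn_Suc_eq:
  "Dn (Suc m) = {(p,u). 0<p \<and> -1<u \<and> (1/p, (u+1)/p) \<in> Gset (Dn m)}"
proof -
  have e: "((u+1)/p)/(1/p)^3 = p^2 * (u+1)" if "0<p" for p u :: real
    using that by (simp add: power_one_over field_simps power2_eq_square power3_eq_cube)
  have "(p,u) \<in> Dn (Suc m) \<longleftrightarrow> (p,u) \<in> {(p,u). 0<p \<and> -1<u \<and> (1/p, (u+1)/p) \<in> Gset (Dn m)}"
    for p u
  proof (cases "0 < p")
    case True
    have "(p,u) \<in> {(p,u). 0<p \<and> -1<u \<and> (1/p, (u+1)/p) \<in> Gset (Dn m)} \<longleftrightarrow>
        0<p \<and> -1<u \<and> (((u+1)/p)/(1/p)^3 - 1, 1/p) \<in> Dn m"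
      unfolding Gset_def using True by simp
    also have "\<dots> \<longleftrightarrow> 0<p \<and> -1<u \<and> (p^2 * (u+1) - 1, 1/p) \<in> Dn m"
      using e[OF True, of u] by simp
    finally show ?thesis using memSuc by simp
  next
    case False
    then show ?thesis using memSuc by simp
  qed
  then show ?thesis by auto
qed

lemma invariant:
  "convex (Dn m) \<and> Mprop (Dn m) \<and> (\<forall>q v. (q,v)\<in>Dn m \<longrightarrow> 0<q)"
proof (induction m)
  case 0
  have c: "convex D0"
  proof (rule convex_pairsI)
    fix a b c d l :: real
    assume "(a,b) \<in> D0" "(c,d) \<in> D0" "0<l" "l<1"
    then have "0<a" "-1<b" "0<c" "-1<d" by (auto simp: D0_def)
    have "0 < l * a" "0 < (1-l) * c" using \<open>0<a\<close> \<open>0<c\<close> \<open>0<l\<close> \<open>l<1\<close> by simp_all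
    moreover have "l * (b+1) > 0" "(1-l) * (d+1) > 0" using \<open>-1<b\<close> \<open>-1<d\<close> \<open>0<l\<close> \<open>l<1\<close> by simp_all
    ultimately show "(l * a + (1-l) * c, l * b + (1-l) * d) \<in> D0"
      by (simp add: D0_def algebra_simps)
  qed
  have "Mprop D0" unfolding Mprop_def D0_def by auto
  then show ?case using c by (auto simp: D0_def)
next
  case (Suc m)
  then have cD: "convex (Dn m)" and M: "Mprop (Dn m)" and pos: "\<And>q v. (q,v)\<in>Dn m \<Longrightarrow> 0<q"
    by auto
  have c: "convex (Dn (Suc m))"
    unfolding Dn_Suc_eq by (rule persp_convex[OF G_convex[OF cD M pos]])
  have P: "\<forall>q v. (q,v)\<in>Dn (Suc m) \<longrightarrow> 0<q" by (auto simp: D0_def)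
  have "Mprop (Dn (Suc m))"
    unfolding Mprop_def
  proof (intro allI impI)
    fix p u p2 u2 :: real
    assume h: "(p,u) \<in> Dn (Suc m)" and u0: "0<u" and u20: "0<u2" and pp: "p \<le> p2"
      and hm: "(1+p) * u \<le> (1+p2) * u2"
    from memSuc[THEN iffD1, OF h] have p0: "0<p" and um: "-1<u" and hD: "(p^2 * (u+1) - 1, 1/p) \<in> Dn m"
      by auto
    have p20: "0 < p2" using p0 pp by simp
    have K: "p * (u+1) \<le> p2 * (u2+1)"
    proof (cases "u \<le> u2")
      case True
      show ?thesis by (rule mult_mono) (use True pp p20 um in auto)
    next
      case False
      have "p * u + u \<le> p2 * u2 + u2" using hm by (simp add: algebra_simps)
      moreover have "p * (u+1) = p * u + p" "p2 * (u2+1) = p2 * u2 + p2" by (simp_all add: algebra_simps)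
      ultimately show ?thesis using False pp by linarith
    qed
    have q: "p^2 * (u+1) - 1 \<le> p2^2 * (u2+1) - 1"
    proof -
      have "p * (p * (u+1)) \<le> p2 * (p2 * (u2+1))"
        by (rule mult_mono) (use K pp p0 um in auto)
      then show ?thesis by (simp add: power2_eq_square algebra_simps)
    qed
    have r: "(1 + (p^2 * (u+1) - 1)) * (1/p) \<le> (1 + (p2^2 * (u2+1) - 1)) * (1/p2)"
      using K p0 p20 by (simp add: power2_eq_square)
    have "(p2^2 * (u2+1) - 1, 1/p2) \<in> Dn m"
      by (rule MpropD[OF M hD _ _ q r]) (use p0 p20 in auto)
    then show "(p2, u2) \<in> Dn (Suc m)" using p20 u20 memSuc[of p2 u2 m] by linarith
  qed
  then show ?case using c P by simp
qed

theorem proposition2: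
  fixes n :: nat
  shows "convex (Dn n)"
  using invariant by blast

end
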